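(* Let $\mathcal{P}$ be a locally geometric poset and $\mathcal{Q}$ a TM-ideal of $\mathcal{P}$ with $\operatorname{rk}(\mathcal{Q})=\operatorname{rk}(\mathcal{P})-1$. Then for every $a\in A(\mathcal{P})\setminus A(\mathcal{Q})$ there is a poset isomorphism $\mathcal{Q}\cong\mathcal{P}_{\ge a}$.
   Context: All posets are finite, have a unique minimal element $\hat0$ and are ranked; $\operatorname{rk}$ of a poset is the maximum rank of its elements. $A(\cdot)$ denotes the set of atoms (rank-1 elements). $\bigvee T$ is the set of minimal upper bounds of $T$, $x\vee y=\bigvee\{x,y\}$, $x\wedge y$ the meet. A lattice is geometric if $y$ covers $x$ iff there is an atom $a\not\le x$ with $y=x\vee a$; $\mathcal{P}$ is locally geometric if each $\mathcal{P}_{\le x}$ is a geometric lattice. An element $x$ of a geometric lattice $L$ is modular if $x\wedge(y\vee z)=(x\wedge y)\vee z$ for all $z\le x$, $y\in L$. An order ideal $\mathcal{Q}$ is pure if all its maximal elements have the same rank and join-closed if $T\subseteq\mathcal{Q}$ implies $\bigvee T\subseteq\mathcal{Q}$. A TM-ideal of $\mathcal{P}$ is a pure, join-closed order ideal $\mathcal{Q}$ such that (1* ) $|a\vee y|=1$ for all $y\in\mathcal{Q}$ and $a\in A(\mathcal{P})\setminus A(\mathcal{Q})$, and (2) for every maximal $x\in\mathcal{P}$ there is a maximal $y\in\mathcal{Q}$ that is modular in $\mathcal{P}_{\le x}$. $\mathcal{P}_{\ge a}=\{y\in\mathcal{P}:y\ge a\}$ with the induced order. *)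

theory Defs
  imports Main
begin

text \<open>A poset is given by a carrier set P and an order relation le (only its
restriction to P matters). All notions below are relative to a carrier.\<close>

definition partial_order_on' :: "'a set \<Rightarrow> ('a \<Rightarrow> 'a \<Rightarrow> bool) \<Rightarrow> bool" where
  "partial_order_on' P le \<longleftrightarrow>
     (\<forall>x\<in>P. le x x) \<and>
     (\<forall>x\<in>P. \<forall>y\<in>P. le x y \<and> le y x \<longrightarrow> x = y) \<and>
     (\<forall>x\<in>P. \<forall>y\<in>P. \<forall>z\<in>P. le x y \<and> le y z \<longrightarrow> le x z)"

definition pchain :: "'a set \<Rightarrow> ('a \<Rightarrow> 'a \<Rightarrow> bool) \<Rightarrow> 'a set \<Rightarrow> bool" where
  "pchain P le C \<longleftrightarrow> C \<subseteq> P \<and> (\<forall>x\<in>C. \<forall>y\<in>C. le x y \<or> le y x)"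

text \<open>Height (= rank in a ranked poset with bottom): length of a longest chain below x.\<close>
definition height :: "'a set \<Rightarrow> ('a \<Rightarrow> 'a \<Rightarrow> bool) \<Rightarrow> 'a \<Rightarrow> nat" where
  "height P le x = Max {card C | C. pchain P le C \<and> (\<forall>c\<in>C. le c x)} - 1"

definition rk :: "'a set \<Rightarrow> ('a \<Rightarrow> 'a \<Rightarrow> bool) \<Rightarrow> nat" where
  "rk P le = Max (height P le ` P)"

definition covers :: "'a set \<Rightarrow> ('a \<Rightarrow> 'a \<Rightarrow> bool) \<Rightarrow> 'a \<Rightarrow> 'a \<Rightarrow> bool" where
  "covers P le x y \<longleftrightarrow> x \<in> P \<and> y \<in> P \<and> le x y \<and> x \<noteq> y \<and>
     \<not> (\<exists>z\<in>P. le x z \<and> le z y \<and> z \<noteq> x \<and> z \<noteq> y)"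

definition ranked :: "'a set \<Rightarrow> ('a \<Rightarrow> 'a \<Rightarrow> bool) \<Rightarrow> bool" where
  "ranked P le \<longleftrightarrow> (\<forall>x\<in>P. \<forall>y\<in>P. covers P le x y \<longrightarrow> height P le y = height P le x + 1)"

definition fin_ranked_poset :: "'a set \<Rightarrow> ('a \<Rightarrow> 'a \<Rightarrow> bool) \<Rightarrow> bool" where
  "fin_ranked_poset P le \<longleftrightarrow> finite P \<and> partial_order_on' P le \<and>
     (\<exists>z\<in>P. \<forall>x\<in>P. le x z \<longrightarrow> x = z) \<and>
     (\<forall>z\<in>P. \<forall>z'\<in>P. (\<forall>x\<in>P. le x z \<longrightarrow> x = z) \<and> (\<forall>x\<in>P. le x z' \<longrightarrow> x = z') \<longrightarrow> z = z') \<and>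
     ranked P le"

definition atoms :: "'a set \<Rightarrow> ('a \<Rightarrow> 'a \<Rightarrow> bool) \<Rightarrow> 'a set" where
  "atoms P le = {x \<in> P. height P le x = 1}"

definition upper_bounds :: "'a set \<Rightarrow> ('a \<Rightarrow> 'a \<Rightarrow> bool) \<Rightarrow> 'a set \<Rightarrow> 'a set" where
  "upper_bounds P le T = {y \<in> P. \<forall>t\<in>T. le t y}"

definition joins :: "'a set \<Rightarrow> ('a \<Rightarrow> 'a \<Rightarrow> bool) \<Rightarrow> 'a set \<Rightarrow> 'a set" where
  "joins P le T = {y \<in> upper_bounds P le T. \<forall>z\<in>upper_bounds P le T. le z y \<longrightarrow> z = y}"

definition lower_bounds :: "'a set \<Rightarrow> ('a \<Rightarrow> 'a \<Rightarrow> bool) \<Rightarrow> 'a set \<Rightarrow> 'a set" where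
  "lower_bounds P le T = {y \<in> P. \<forall>t\<in>T. le y t}"

definition ljoin :: "'a set \<Rightarrow> ('a \<Rightarrow> 'a \<Rightarrow> bool) \<Rightarrow> 'a \<Rightarrow> 'a \<Rightarrow> 'a" where
  "ljoin L le x y = (THE j. j \<in> upper_bounds L le {x, y} \<and> (\<forall>u\<in>upper_bounds L le {x, y}. le j u))"

definition lmeet :: "'a set \<Rightarrow> ('a \<Rightarrow> 'a \<Rightarrow> bool) \<Rightarrow> 'a \<Rightarrow> 'a \<Rightarrow> 'a" where
  "lmeet L le x y = (THE m. m \<in> lower_bounds L le {x, y} \<and> (\<forall>u\<in>lower_bounds L le {x, y}. le u m))"

definition is_lattice :: "'a set \<Rightarrow> ('a \<Rightarrow> 'a \<Rightarrow> bool) \<Rightarrow> bool" where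
  "is_lattice L le \<longleftrightarrow> partial_order_on' L le \<and>
     (\<forall>x\<in>L. \<forall>y\<in>L.
        (\<exists>j\<in>upper_bounds L le {x, y}. \<forall>u\<in>upper_bounds L le {x, y}. le j u) \<and>
        (\<exists>m\<in>lower_bounds L le {x, y}. \<forall>u\<in>lower_bounds L le {x, y}. le u m))"

definition geometric :: "'a set \<Rightarrow> ('a \<Rightarrow> 'a \<Rightarrow> bool) \<Rightarrow> bool" where
  "geometric L le \<longleftrightarrow> is_lattice L le \<and>
     (\<forall>x\<in>L. \<forall>y\<in>L. covers L le x y \<longleftrightarrow>
        (\<exists>a\<in>atoms L le. \<not> le a x \<and> y = ljoin L le x a))"

definition down :: "'a set \<Rightarrow> ('a \<Rightarrow> 'a \<Rightarrow> bool) \<Rightarrow> 'a \<Rightarrow> 'a set" where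
  "down P le x = {y \<in> P. le y x}"

definition up :: "'a set \<Rightarrow> ('a \<Rightarrow> 'a \<Rightarrow> bool) \<Rightarrow> 'a \<Rightarrow> 'a set" where
  "up P le x = {y \<in> P. le x y}"

definition locally_geometric :: "'a set \<Rightarrow> ('a \<Rightarrow> 'a \<Rightarrow> bool) \<Rightarrow> bool" where
  "locally_geometric P le \<longleftrightarrow> (\<forall>x\<in>P. geometric (down P le x) le)"

definition modular_elem :: "'a set \<Rightarrow> ('a \<Rightarrow> 'a \<Rightarrow> bool) \<Rightarrow> 'a \<Rightarrow> bool" where
  "modular_elem L le x \<longleftrightarrow> x \<in> L \<and>
     (\<forall>y\<in>L. \<forall>z\<in>L. le z x \<longrightarrow>
        lmeet L le x (ljoin L le y z) = ljoin L le (lmeet L le x y) z)"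

definition maximal_elems :: "'a set \<Rightarrow> ('a \<Rightarrow> 'a \<Rightarrow> bool) \<Rightarrow> 'a set" where
  "maximal_elems P le = {x \<in> P. \<forall>y\<in>P. le x y \<longrightarrow> y = x}"

definition order_ideal :: "'a set \<Rightarrow> ('a \<Rightarrow> 'a \<Rightarrow> bool) \<Rightarrow> 'a set \<Rightarrow> bool" where
  "order_ideal P le Q \<longleftrightarrow> Q \<subseteq> P \<and> (\<forall>y\<in>Q. \<forall>x\<in>P. le x y \<longrightarrow> x \<in> Q)"

definition pure :: "'a set \<Rightarrow> ('a \<Rightarrow> 'a \<Rightarrow> bool) \<Rightarrow> bool" where
  "pure Q le \<longleftrightarrow> (\<forall>x\<in>maximal_elems Q le. \<forall>y\<in>maximal_elems Q le. height Q le x = height Q le y)"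

definition join_closed :: "'a set \<Rightarrow> ('a \<Rightarrow> 'a \<Rightarrow> bool) \<Rightarrow> 'a set \<Rightarrow> bool" where
  "join_closed P le Q \<longleftrightarrow> (\<forall>T. T \<subseteq> Q \<longrightarrow> joins P le T \<subseteq> Q)"

definition TM_ideal :: "'a set \<Rightarrow> ('a \<Rightarrow> 'a \<Rightarrow> bool) \<Rightarrow> 'a set \<Rightarrow> bool" where
  "TM_ideal P le Q \<longleftrightarrow> order_ideal P le Q \<and> pure Q le \<and> join_closed P le Q \<and>
     (\<forall>y\<in>Q. \<forall>a\<in>atoms P le - atoms Q le. card (joins P le {a, y}) = 1) \<and>
     (\<forall>x\<in>maximal_elems P le. \<exists>y\<in>maximal_elems Q le. modular_elem (down P le x) le y)"

definition poset_iso :: "('a \<Rightarrow> 'a \<Rightarrow> bool) \<Rightarrow> 'a set \<Rightarrow> 'a set \<Rightarrow> ('a \<Rightarrow> 'a) \<Rightarrow> bool" where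
  "poset_iso le A B f \<longleftrightarrow> bij_betw f A B \<and> (\<forall>x\<in>A. \<forall>y\<in>A. le x y \<longleftrightarrow> le (f x) (f y))"

end

theory Submission imports Defs begin

lemma po_subset: "partial_order_on' S le \<Longrightarrow> T \<subseteq> S \<Longrightarrow> partial_order_on' T le"
  unfolding partial_order_on'_def by (meson subsetD)

lemma po_refl: "partial_order_on' S le \<Longrightarrow> x \<in> S \<Longrightarrow> le x x"
  unfolding partial_order_on'_def by blast
lemma po_antisym: "partial_order_on' S le \<Longrightarrow> x \<in> S \<Longrightarrow> y \<in> S \<Longrightarrow> le x y \<Longrightarrow> le y x \<Longrightarrow> x = y"
  unfolding partial_order_on'_def by blast
lemma po_trans: "partial_order_on' S le \<Longrightarrow> x \<in> S \<Longrightarrow> y \<in> S \<Longrightarrow> z \<in> S \<Longrightarrow> le x y \<Longrightarrow> le y z \<Longrightarrow> le x z"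
  unfolding partial_order_on'_def by blast

lemma height_downclosed:
  assumes "D \<subseteq> S" "\<forall>v\<in>D. \<forall>w\<in>S. le w v \<longrightarrow> w \<in> D" "v \<in> D"
  shows "height D le v = height S le v"
proof -
  have "{card C |C. pchain D le C \<and> (\<forall>c\<in>C. le c v)} = {card C |C. pchain S le C \<and> (\<forall>c\<in>C. le c v)}"
    using assms unfolding pchain_def by blast
  then show ?thesis unfolding height_def by simp
qed

lemma chs_fin: "finite S \<Longrightarrow> finite {card C |C. pchain S le C \<and> (\<forall>c\<in>C. le c v)}"
  by (rule finite_subset[of _ "{..card S}"]) (auto simp: pchain_def intro: card_mono)

lemma chs_one: "partial_order_on' S le \<Longrightarrow> v \<in> S \<Longrightarrow> 1 \<in> {card C |C. pchain S le C \<and> (\<forall>c\<in>C. le c v)}"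
  apply (rule CollectI, rule exI[of _ "{v}"])
  by (auto simp: pchain_def partial_order_on'_def)

lemma height_strict:
  assumes fin: "finite S" and po: "partial_order_on' S le" and "u \<in> S" "v \<in> S" "le u v" "u \<noteq> v"
  shows "height S le u < height S le v"
proof -
  let ?A = "\<lambda>v. {card C |C. pchain S le C \<and> (\<forall>c\<in>C. le c v)}"
  have fa: "finite (?A u)" "finite (?A v)" using chs_fin[OF fin] by auto
  have "Max (?A u) \<in> ?A u" using fa chs_one[OF po \<open>u\<in>S\<close>] by (intro Max_in) auto
  then obtain C where C: "pchain S le C" "\<forall>c\<in>C. le c u" "card C = Max (?A u)" by auto
  have m1: "1 \<le> Max (?A u)" using fa chs_one[OF po \<open>u\<in>S\<close>] by (simp add: Max_ge)
  have vC: "v \<notin> C"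
  proof
    assume "v \<in> C" then have "le v u" using C by auto
    then show False using po_antisym[OF po \<open>u\<in>S\<close> \<open>v\<in>S\<close>] assms by auto
  qed
  have finC: "finite C" using C fin unfolding pchain_def by (meson finite_subset)
  have CS: "C \<subseteq> S" using C unfolding pchain_def by auto
  have Cv: "\<forall>c\<in>C. le c v" using C CS po_trans[OF po _ \<open>u\<in>S\<close> \<open>v\<in>S\<close>] assms(5) by blast
  have "pchain S le (insert v C)" "\<forall>c\<in>insert v C. le c v"
    using C CS Cv po_refl[OF po \<open>v\<in>S\<close>] \<open>v\<in>S\<close> unfolding pchain_def by auto
  then have "card (insert v C) \<in> ?A v" by blast
  then have "card C + 1 \<le> Max (?A v)" using vC finC fa by (simp add: Max_ge)
  then show ?thesis using m1 C unfolding height_def by simp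
qed

lemma height_mono:
  assumes "finite S" "partial_order_on' S le" "u \<in> S" "v \<in> S" "le u v"
  shows "height S le u \<le> height S le v"
  using height_strict[OF assms] by (cases "u = v") auto

lemma ex_cover:
  assumes fin: "finite S" and po: "partial_order_on' S le" and "v \<in> S" "W \<in> S" "le v W" "v \<noteq> W"
  shows "\<exists>W1\<in>S. le v W1 \<and> covers S le W1 W"
proof -
  define T where "T = {w\<in>S. le v w \<and> le w W \<and> w \<noteq> W}"
  have "v \<in> T" "finite T" using assms po_refl[OF po] unfolding T_def by auto
  then have "Max (height S le ` T) \<in> height S le ` T" by (intro Max_in) auto
  then obtain w where w: "w \<in> T" "height S le w = Max (height S le ` T)" by auto
  have hw: "\<forall>t\<in>T. height S le t \<le> height S le w" using w \<open>finite T\<close> by simp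
  have "covers S le w W"
    unfolding covers_def
  proof (intro conjI notI)
    fix z assume "\<exists>z\<in>S. le w z \<and> le z W \<and> z \<noteq> w \<and> z \<noteq> W"
    then obtain z where z: "z\<in>S" "le w z" "le z W" "z \<noteq> w" "z \<noteq> W" by blast
    have "z \<in> T" using z w po_trans[OF po] \<open>v\<in>S\<close> unfolding T_def by blast
    moreover have "height S le w < height S le z"
    proof -
      have "w \<in> S" using w unfolding T_def by auto
      then show ?thesis using height_strict[OF fin po \<open>w\<in>S\<close> z(1) z(2)] z(4) by auto
    qed
    ultimately show False using hw by fastforce
  qed (use w assms in \<open>auto simp: T_def\<close>)
  then show ?thesis using w unfolding T_def by auto
qed

lemma ex_max:
  assumes fin: "finite S" and po: "partial_order_on' S le" and "v \<in> S"
  shows "\<exists>m\<in>maximal_elems S le. le v m"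
proof -
  define T where "T = {w\<in>S. le v w}"
  have "v \<in> T" "finite T" using assms po_refl[OF po] unfolding T_def by auto
  then have "Max (height S le ` T) \<in> height S le ` T" by (intro Max_in) auto
  then obtain w where w: "w \<in> T" "height S le w = Max (height S le ` T)" by auto
  have hw: "\<forall>t\<in>T. height S le t \<le> height S le w" using w \<open>finite T\<close> by simp
  have "w \<in> maximal_elems S le"
    unfolding maximal_elems_def
  proof (safe)
    show "w \<in> S" using w T_def by auto
    fix y assume y: "y \<in> S" "le w y"
    show "y = w"
    proof (rule ccontr)
      assume "y \<noteq> w"
      have "w \<in> S" using w T_def by auto
      then have "height S le w < height S le y" using height_strict[OF fin po \<open>w\<in>S\<close> y(1) y(2)] \<open>y\<noteq>w\<close> by auto
      moreover have "y \<in> T" using y w po_trans[OF po] \<open>v\<in>S\<close> unfolding T_def by blast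
      ultimately show False using hw by fastforce
    qed
  qed
  then show ?thesis using w T_def by auto
qed

lemma ex_bot:
  assumes "fin_ranked_poset P le"
  shows "\<exists>z\<in>P. \<forall>v\<in>P. le z v"
proof -
  have fin: "finite P" and po: "partial_order_on' P le" using assms unfolding fin_ranked_poset_def by auto
  obtain z0 where z0: "z0 \<in> P" "\<forall>x\<in>P. le x z0 \<longrightarrow> x = z0"
    using assms unfolding fin_ranked_poset_def by auto
  have uniq: "\<And>z. z \<in> P \<Longrightarrow> \<forall>x\<in>P. le x z \<longrightarrow> x = z \<Longrightarrow> z = z0"
    using assms z0 unfolding fin_ranked_poset_def by blast
  have "le z0 v" if "v \<in> P" for v
  proof -
    define T where "T = {w\<in>P. le w v}"
    have "v \<in> T" "finite T" using that fin po_refl[OF po] unfolding T_def by auto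
    then have "Min (height P le ` T) \<in> height P le ` T" by (intro Min_in) auto
    then obtain w where w: "w \<in> T" "height P le w = Min (height P le ` T)" by auto
    have hw: "\<forall>t\<in>T. height P le w \<le> height P le t" using w \<open>finite T\<close> by simp
    have "\<forall>x\<in>P. le x w \<longrightarrow> x = w"
    proof (intro ballI impI, rule ccontr)
      fix x assume x: "x \<in> P" "le x w" "x \<noteq> w"
      have "w \<in> P" using w T_def by auto
      then have "height P le x < height P le w" using height_strict[OF fin po x(1) \<open>w\<in>P\<close> x(2)] x(3) by auto
      moreover have "x \<in> T" using x w po_trans[OF po] that unfolding T_def by blast
      ultimately show False using hw by fastforce
    qed
    then have "w = z0" using uniq w T_def by auto
    then show ?thesis using w T_def by auto
  qed
  then show ?thesis using z0 by auto
qed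

lemma rk_max:
  assumes fin: "finite S" and po: "partial_order_on' S le" and pu: "pure S le"
    and m: "m \<in> maximal_elems S le"
  shows "height S le m = rk S le"
proof -
  have "S \<noteq> {}" using m unfolding maximal_elems_def by auto
  then have "Max (height S le ` S) \<in> height S le ` S" using fin by (intro Max_in) auto
  then obtain q where q: "q \<in> S" "height S le q = rk S le" unfolding rk_def by auto
  obtain m' where m': "m' \<in> maximal_elems S le" "le q m'" using ex_max[OF fin po q(1)] by auto
  have "m' \<in> S" using m' unfolding maximal_elems_def by auto
  have "height S le q \<le> height S le m'"
    using height_mono[OF fin po q(1) \<open>m'\<in>S\<close> m'(2)] .
  moreover have "height S le m' \<le> rk S le" using fin \<open>m'\<in>S\<close> unfolding rk_def by simp
  ultimately have "height S le m' = rk S le" using q by simp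
  moreover have "height S le m = height S le m'" using pu m m'(1) unfolding pure_def by blast
  ultimately show ?thesis by simp
qed


lemma ljoin_props:
  assumes L: "is_lattice L le" and "x \<in> L" "y \<in> L"
  shows "ljoin L le x y \<in> L \<and> le x (ljoin L le x y) \<and> le y (ljoin L le x y) \<and>
         (\<forall>u\<in>L. le x u \<longrightarrow> le y u \<longrightarrow> le (ljoin L le x y) u)"
proof -
  have po: "partial_order_on' L le" using L unfolding is_lattice_def by auto
  obtain j where j: "j \<in> upper_bounds L le {x, y}" "\<forall>u\<in>upper_bounds L le {x, y}. le j u"
    using L assms unfolding is_lattice_def by blast
  have "ljoin L le x y = j"
    unfolding ljoin_def
  proof (rule the_equality)
    fix j' assume "j' \<in> upper_bounds L le {x, y} \<and> (\<forall>u\<in>upper_bounds L le {x, y}. le j' u)"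
    then have j': "j' \<in> upper_bounds L le {x, y}" "\<forall>u\<in>upper_bounds L le {x, y}. le j' u" by auto
    have "le j j'" "le j' j" using j j' by auto
    moreover have "j \<in> L" "j' \<in> L" using j(1) j'(1) unfolding upper_bounds_def by auto
    ultimately show "j' = j" using po_antisym[OF po] by blast
  qed (use j in auto)
  then show ?thesis using j unfolding upper_bounds_def by auto
qed

lemma lmeet_props:
  assumes L: "is_lattice L le" and "x \<in> L" "y \<in> L"
  shows "lmeet L le x y \<in> L \<and> le (lmeet L le x y) x \<and> le (lmeet L le x y) y \<and>
         (\<forall>u\<in>L. le u x \<longrightarrow> le u y \<longrightarrow> le u (lmeet L le x y))"
proof -
  have po: "partial_order_on' L le" using L unfolding is_lattice_def by auto
  obtain j where j: "j \<in> lower_bounds L le {x, y}" "\<forall>u\<in>lower_bounds L le {x, y}. le u j"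
    using L assms unfolding is_lattice_def by blast
  have "lmeet L le x y = j"
    unfolding lmeet_def
  proof (rule the_equality)
    fix j' assume "j' \<in> lower_bounds L le {x, y} \<and> (\<forall>u\<in>lower_bounds L le {x, y}. le u j')"
    then have j': "j' \<in> lower_bounds L le {x, y}" "\<forall>u\<in>lower_bounds L le {x, y}. le u j'" by auto
    have "le j j'" "le j' j" using j j' by auto
    moreover have "j \<in> L" "j' \<in> L" using j(1) j'(1) unfolding lower_bounds_def by auto
    ultimately show "j' = j" using po_antisym[OF po] by blast
  qed (use j in auto)
  then show ?thesis using j unfolding lower_bounds_def by auto
qed

lemma ljoin_commute: "ljoin L le x y = ljoin L le y x"
  unfolding ljoin_def by (simp add: insert_commute)

lemma down_facts:
  assumes po: "partial_order_on' P le" and fin: "finite P" and x: "x \<in> P"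
  shows "down P le x \<subseteq> P" "x \<in> down P le x" "finite (down P le x)"
    "partial_order_on' (down P le x) le"
    "\<forall>v\<in>down P le x. \<forall>w\<in>P. le w v \<longrightarrow> w \<in> down P le x"
proof -
  show 1: "down P le x \<subseteq> P" unfolding down_def by auto
  show "x \<in> down P le x" using po_refl[OF po x] x unfolding down_def by auto
  show "finite (down P le x)" using fin 1 finite_subset by blast
  show "partial_order_on' (down P le x) le" using po_subset[OF po 1] .
  show "\<forall>v\<in>down P le x. \<forall>w\<in>P. le w v \<longrightarrow> w \<in> down P le x"
    using po_trans[OF po _ _ x] unfolding down_def by blast
qed

lemma atoms_down:
  assumes "D \<subseteq> S" "\<forall>v\<in>D. \<forall>w\<in>S. le w v \<longrightarrow> w \<in> D"
  shows "atoms D le = atoms S le \<inter> D"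
  using height_downclosed[OF assms] assms(1) unfolding atoms_def by auto

lemma covers_down:
  assumes "D \<subseteq> S" "\<forall>v\<in>D. \<forall>w\<in>S. le w v \<longrightarrow> w \<in> D" "u \<in> D" "v \<in> D"
  shows "covers D le u v \<longleftrightarrow> covers S le u v"
  using assms unfolding covers_def by blast

lemma ljoin_in_joins:
  assumes po: "partial_order_on' P le" and fin: "finite P" and x: "x \<in> P"
    and L: "is_lattice (down P le x) le" and u: "u \<in> down P le x" and v: "v \<in> down P le x"
  shows "ljoin (down P le x) le u v \<in> joins P le {u, v}"
proof -
  note D = down_facts[OF po fin x]
  note J = ljoin_props[OF L u v]
  let ?j = "ljoin (down P le x) le u v"
  have jP: "?j \<in> P" using J D by auto
  have ub: "\<forall>t\<in>{u, v}. le t ?j" using J by auto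
  have mn: "\<forall>z\<in>P. (\<forall>t\<in>{u, v}. le t z) \<longrightarrow> le z ?j \<longrightarrow> z = ?j"
  proof (intro ballI impI)
    fix z assume z: "z \<in> P" "\<forall>t\<in>{u, v}. le t z" "le z ?j"
    have "z \<in> down P le x" using D(5) J z by blast
    then have "le ?j z" using J z by auto
    then show "z = ?j" using po_antisym[OF po] z jP by blast
  qed
  show ?thesis unfolding joins_def upper_bounds_def using jP ub mn by blast
qed

lemma ex_atom:
  assumes fin: "finite L" and G: "geometric L le" and "v \<in> L" "W \<in> L" "le v W" "v \<noteq> W"
  shows "\<exists>b\<in>atoms L le. le b W \<and> \<not> le b v"
proof -
  have L: "is_lattice L le" and po: "partial_order_on' L le" using G unfolding geometric_def is_lattice_def by auto
  obtain W1 where W1: "W1 \<in> L" "le v W1" "covers L le W1 W" using ex_cover[OF fin po assms(3-6)] by blast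
  then obtain b where b: "b \<in> atoms L le" "\<not> le b W1" "W = ljoin L le W1 b"
    using G assms unfolding geometric_def by blast
  have "b \<in> L" using b unfolding atoms_def by auto
  then have "le b W" using ljoin_props[OF L W1(1) \<open>b\<in>L\<close>] b by auto
  moreover have "\<not> le b v" using b W1 po_trans[OF po \<open>b\<in>L\<close> assms(3) W1(1)] by blast
  ultimately show ?thesis using b by auto
qed


theorem lemma4p4:
  fixes P Q :: "'a set" and le :: "'a \<Rightarrow> 'a \<Rightarrow> bool"
  assumes "fin_ranked_poset P le"
    and "locally_geometric P le"
    and "TM_ideal P le Q"
    and "rk Q le + 1 = rk P le"
  shows "\<forall>a \<in> atoms P le - atoms Q le. \<exists>f. poset_iso le Q (up P le a) f"
proof
  fix a assume a: "a \<in> atoms P le - atoms Q le"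
  have fin: "finite P" and po: "partial_order_on' P le" and rkd: "ranked P le"
    using assms(1) unfolding fin_ranked_poset_def by auto
  have refl: "\<And>x. x \<in> P \<Longrightarrow> le x x" using po unfolding partial_order_on'_def by blast
  have asym: "\<And>x y. x \<in> P \<Longrightarrow> y \<in> P \<Longrightarrow> le x y \<Longrightarrow> le y x \<Longrightarrow> x = y"
    using po unfolding partial_order_on'_def by blast
  have tr: "\<And>x y z. x \<in> P \<Longrightarrow> y \<in> P \<Longrightarrow> z \<in> P \<Longrightarrow> le x y \<Longrightarrow> le y z \<Longrightarrow> le x z"
    using po unfolding partial_order_on'_def by blast
  obtain bot where bot: "bot \<in> P" "\<And>v. v \<in> P \<Longrightarrow> le bot v" using ex_bot[OF assms(1)] by blast
  have QP: "Q \<subseteq> P" and Qdown: "\<forall>v\<in>Q. \<forall>w\<in>P. le w v \<longrightarrow> w \<in> Q"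
    using assms(3) unfolding TM_ideal_def order_ideal_def by auto
  have Qd: "\<And>v w. v \<in> Q \<Longrightarrow> w \<in> P \<Longrightarrow> le w v \<Longrightarrow> w \<in> Q" using Qdown by blast
  have pure: "pure Q le" and jc: "join_closed P le Q"
    and card1: "\<forall>y\<in>Q. \<forall>a\<in>atoms P le - atoms Q le. card (joins P le {a, y}) = 1"
    and modu: "\<forall>x\<in>maximal_elems P le. \<exists>y\<in>maximal_elems Q le. modular_elem (down P le x) le y"
    using assms(3) unfolding TM_ideal_def by auto
  have finQ: "finite Q" using fin QP finite_subset by blast
  have poQ: "partial_order_on' Q le" using po_subset[OF po QP] .
  have aP: "a \<in> P" and ha: "height P le a = 1" using a unfolding atoms_def by auto
  have aQ: "a \<notin> Q"
  proof
    assume "a \<in> Q"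
    then have "a \<in> atoms Q le" using atoms_down[OF QP Qdown] a by auto
    then show False using a by auto
  qed
  have geo: "\<And>x. x \<in> P \<Longrightarrow> geometric (down P le x) le"
    using assms(2) unfolding locally_geometric_def by auto
  have lat: "\<And>x. x \<in> P \<Longrightarrow> is_lattice (down P le x) le"
    using geo unfolding geometric_def by auto
  define f where "f = (\<lambda>y. THE j. j \<in> joins P le {a, y})"
  have fJ: "joins P le {a, y} = {f y}" if "y \<in> Q" for y
  proof -
    have "card (joins P le {a, y}) = 1" using card1 a that by auto
    then obtain j where j: "joins P le {a, y} = {j}" using card_1_singletonE by blast
    then have "f y = j" unfolding f_def by auto
    then show ?thesis using j by simp
  qed
  have fy: "f y \<in> P \<and> le a (f y) \<and> le y (f y)" if "y \<in> Q" for y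
    using fJ[OF that] unfolding joins_def upper_bounds_def by auto
  have inD: "\<And>x v. v \<in> P \<Longrightarrow> le v x \<Longrightarrow> v \<in> down P le x" unfolding down_def by auto
  have fL: "f y = ljoin (down P le x) le y a \<and> covers P le y (f y)"
    if y: "y \<in> Q" and x: "x \<in> P" "le y x" "le a x" for y x
  proof -
    let ?L = "down P le x"
    note D = down_facts[OF po fin x(1)]
    have yL: "y \<in> ?L" and aL: "a \<in> ?L" using x y QP aP inD by auto
    have "ljoin ?L le y a \<in> joins P le {y, a}" using ljoin_in_joins[OF po fin x(1) lat[OF x(1)] yL aL] .
    then have e: "f y = ljoin ?L le y a" using fJ[OF y] by (simp add: insert_commute)
    have "a \<in> atoms ?L le" using atoms_down[OF D(1) D(5)] a aL by auto
    moreover have "\<not> le a y" using Qd[OF y aP] aQ by auto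
    ultimately have "covers ?L le y (ljoin ?L le y a)"
      using geo[OF x(1)] yL ljoin_props[OF lat[OF x(1)] yL aL] unfolding geometric_def by blast
    then have "covers P le y (f y)" using covers_down[OF D(1) D(5)] e yL ljoin_props[OF lat[OF x(1)] yL aL] by auto
    then show ?thesis using e by auto
  qed
  have mono: "le (f y) (f y')" if y: "y \<in> Q" "y' \<in> Q" "le y y'" for y y'
  proof -
    obtain x where x: "x \<in> maximal_elems P le" "le (f y') x" using ex_max[OF fin po] fy[OF y(2)] by blast
    have xP: "x \<in> P" using x unfolding maximal_elems_def by auto
    have "le a x" "le y' x" using tr fy[OF y(2)] x xP aP QP y by blast+
    moreover have "le y x" using tr[of y y' x] y QP xP calculation by auto
    ultimately have e: "f y = ljoin (down P le x) le y a" using fL y xP by blast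
    have "f y' \<in> down P le x" using inD fy[OF y(2)] x by auto
    moreover have "le y (f y')" using tr[of y y' "f y'"] y QP fy[OF y(2)] by auto
    ultimately show ?thesis using e ljoin_props[OF lat[OF xP], of y a] fy[OF y(2)] inD y QP aP xP
      \<open>le y x\<close> \<open>le a x\<close> by auto
  qed
  have refl_f: "le y y'" if y: "y \<in> Q" "y' \<in> Q" "le (f y) (f y')" for y y'
  proof -
    obtain x where x: "x \<in> maximal_elems P le" "le (f y') x" using ex_max[OF fin po] fy[OF y(2)] by blast
    have xP: "x \<in> P" using x unfolding maximal_elems_def by auto
    let ?L = "down P le x"
    have ax: "le a x" "le y' x" using tr fy[OF y(2)] x xP aP QP y by blast+
    have yfy: "le y (f y')" using tr[of y "f y" "f y'"] y QP fy by auto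
    have "y \<in> P" using QP y by auto
    then have yx: "le y x" using tr[of y "f y'" x] yfy x xP fy y by auto
    have yL: "y \<in> ?L" "y' \<in> ?L" "f y' \<in> ?L" using inD y QP yx ax fy x by auto
    define w where "w = ljoin ?L le y y'"
    have wJ: "w \<in> joins P le {y, y'}" unfolding w_def using ljoin_in_joins[OF po fin xP lat[OF xP] yL(1,2)] .
    have "{y, y'} \<subseteq> Q" using y by auto
    then have "joins P le {y, y'} \<subseteq> Q" using jc unfolding join_closed_def by blast
    then have wQ: "w \<in> Q" using wJ by blast
    have w: "w \<in> ?L" "le y w" "le y' w" "le w (f y')"
      using ljoin_props[OF lat[OF xP] yL(1,2)] yL yfy fy[OF y(2)] unfolding w_def by auto
    have cov: "covers P le y' (f y')" using fL[OF y(2) xP ax(2) ax(1)] by auto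
    have "w = y' \<or> w = f y'" using cov w wQ QP unfolding covers_def by blast
    moreover have "w \<noteq> f y'" using fy[OF y(2)] wQ aQ Qd aP by blast
    ultimately show ?thesis using w by auto
  qed
  have surj: "\<exists>y\<in>Q. f y = z" if z: "z \<in> P" "le a z" for z
  proof -
    obtain x where x: "x \<in> maximal_elems P le" "le z x" using ex_max[OF fin po z(1)] by blast
    have xP: "x \<in> P" using x unfolding maximal_elems_def by auto
    obtain y0 where y0: "y0 \<in> maximal_elems Q le" "modular_elem (down P le x) le y0"
      using modu x(1) by blast
    let ?L = "down P le x"
    note D = down_facts[OF po fin xP]
    have G: "geometric ?L le" using geo[OF xP] .
    have latL: "is_lattice ?L le" using lat[OF xP] .
    have y0L: "y0 \<in> ?L" using y0(2) unfolding modular_elem_def by auto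
    have y0Q: "y0 \<in> Q" using y0(1) unfolding maximal_elems_def by auto
    have y0P: "y0 \<in> P" "le y0 x" using y0L unfolding down_def by auto
    have ax: "le a x" using tr[OF aP z(1) xP] z x by auto
    have aL: "a \<in> ?L" "z \<in> ?L" "bot \<in> ?L" using inD aP ax z x xP bot by auto
    have hy0: "height P le y0 = rk Q le"
      using rk_max[OF finQ poQ pure y0(1)] height_downclosed[OF QP Qdown y0Q] by simp
    have hx: "height P le x \<le> rk P le" using fin xP unfolding rk_def by simp
    have m: "f y0 = ljoin ?L le y0 a \<and> covers P le y0 (f y0)" using fL[OF y0Q xP y0P(2) ax] .
    have hm: "height P le (f y0) = height P le y0 + 1"
      using rkd m y0P fy[OF y0Q] unfolding ranked_def by blast
    note J = ljoin_props[OF latL]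
    note M = lmeet_props[OF latL]
    have mx: "le (f y0) x" using J[OF y0L aL(1)] m D(2) y0P(2) ax by auto
    have y0a: "ljoin ?L le y0 a = x"
    proof (rule ccontr)
      assume "ljoin ?L le y0 a \<noteq> x"
      then have "height P le (f y0) < height P le x"
        using height_strict[OF fin po _ xP mx] fy[OF y0Q] m by auto
      then show False using hm hy0 hx assms(4) by simp
    qed
    have ay0: "\<not> le a y0" using Qd[OF y0Q aP] aQ by auto
    have finL: "finite ?L" and poL: "partial_order_on' ?L le" using D by auto
    have atL: "\<And>c. c \<in> atoms ?L le \<Longrightarrow> c \<in> ?L \<and> height ?L le c = 1" unfolding atoms_def by auto
    have ateq: "c = d" if "c \<in> atoms ?L le" "d \<in> atoms ?L le" "le c d" for c d
    proof (rule ccontr)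
      assume "c \<noteq> d"
      then have "height ?L le c < height ?L le d" using height_strict[OF finL poL _ _ that(3)] atL that by auto
      then show False using atL that by auto
    qed
    have aA: "a \<in> atoms ?L le" using atoms_down[OF D(1) D(5)] a aL by auto
    have Lt: "\<And>u v w. u\<in>?L \<Longrightarrow> v\<in>?L \<Longrightarrow> w\<in>?L \<Longrightarrow> le u v \<Longrightarrow> le v w \<Longrightarrow> le u w"
      using po_trans[OF poL] by blast
    have La: "\<And>u v. u\<in>?L \<Longrightarrow> v\<in>?L \<Longrightarrow> le u v \<Longrightarrow> le v u \<Longrightarrow> u = v"
      using po_antisym[OF poL] by blast
    have Lr: "\<And>u. u\<in>?L \<Longrightarrow> le u u" using po_refl[OF poL] by blast
    have Lbot: "\<And>u. u\<in>?L \<Longrightarrow> le bot u" using bot D(1) by auto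
    have geoI: "\<And>u v. u \<in> ?L \<Longrightarrow> v \<in> ?L \<Longrightarrow> covers ?L le u v \<longleftrightarrow> (\<exists>d\<in>atoms ?L le. \<not> le d u \<and> v = ljoin ?L le u d)"
      using G unfolding geometric_def by blast
    have bj: "ljoin ?L le bot w = w" if "w \<in> ?L" for w
      using J[OF aL(3) that] La Lr Lbot that by auto
    define Zw where "Zw = lmeet ?L le y0 z"
    have Zw: "Zw \<in> ?L" "le Zw y0" "le Zw z" using M[OF y0L aL(2)] unfolding Zw_def by auto
    have ZwQ: "Zw \<in> Q" using Qd[OF y0Q] Zw D(1) by auto
    have Zwx: "le Zw x" using Zw(1) unfolding down_def by auto
    have fZ: "f Zw = ljoin ?L le Zw a" using fL[OF ZwQ xP Zwx ax] by auto
    define u where "u = ljoin ?L le Zw a"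
    have u: "u \<in> ?L" "le Zw u" "le a u" "le u z" using J[OF Zw(1) aL(1)] aL Zw z unfolding u_def by auto
    have "u = z"
    proof (rule ccontr)
      assume "u \<noteq> z"
      obtain b where b: "b \<in> atoms ?L le" "le b z" "\<not> le b u"
        using ex_atom[OF finL G u(1) aL(2) u(4) \<open>u\<noteq>z\<close>] by blast
      have bL: "b \<in> ?L" using b unfolding atoms_def by auto
      have by0: "\<not> le b y0"
      proof
        assume "le b y0"
        then have "le b Zw" using M[OF y0L aL(2)] bL b unfolding Zw_def by auto
        then show False using Lt[OF bL Zw(1) u(1)] u b by auto
      qed
      have ba: "b \<noteq> a" using b u by auto
      define Y where "Y = ljoin ?L le a b"
      have Y: "Y \<in> ?L" "le a Y" "le b Y" "le Y z" using J[OF aL(1) bL] aL b z unfolding Y_def by auto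
      have key: "\<exists>c\<in>atoms ?L le. le c y0 \<and> le c Y"
      proof (rule ccontr)
        assume nk: "\<not> ?thesis"
        define Mm where "Mm = lmeet ?L le y0 Y"
        have Mm: "Mm \<in> ?L" "le Mm y0" "le Mm Y" using M[OF y0L Y(1)] unfolding Mm_def by auto
        have Mb: "Mm = bot"
        proof (rule ccontr)
          assume "Mm \<noteq> bot"
          then obtain c where c: "c \<in> atoms ?L le" "le c Mm" "\<not> le c bot"
            using ex_atom[OF finL G aL(3) Mm(1) Lbot[OF Mm(1)]] by auto
          have cL: "c \<in> ?L" using c unfolding atoms_def by auto
          have "le c y0" "le c Y" using Lt[OF cL Mm(1)] Mm c y0L Y(1) by auto
          then show False using nk c by blast
        qed
        define S where "S = {Z\<in>?L. le Z y0 \<and> le b (ljoin ?L le a Z)}"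
        have "ljoin ?L le a y0 = x" using y0a ljoin_commute by metis
        moreover have "le b x" using bL unfolding down_def by auto
        ultimately have "y0 \<in> S" using y0L Lr unfolding S_def by auto
        then obtain Z where Z: "Z \<in> S" "\<forall>Z'\<in>S. height ?L le Z \<le> height ?L le Z'"
          using ex_has_least_nat[of "\<lambda>Z. Z\<in>S" y0 "height ?L le"] by blast
        have ZL: "Z \<in> ?L" "le Z y0" "le b (ljoin ?L le a Z)" using Z unfolding S_def by auto
        have Zb: "Z \<noteq> bot"
        proof
          assume "Z = bot"
          have "ljoin ?L le a bot = a" using J[OF aL(1) aL(3)] La Lr Lbot aL by auto
          then show False using ZL \<open>Z=bot\<close> ateq[OF b(1) aA] ba by auto
        qed
        obtain Z1 where Z1: "Z1 \<in> ?L" "covers ?L le Z1 Z"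
          using ex_cover[OF finL poL aL(3) ZL(1) Lbot[OF ZL(1)]] Zb by metis
        then obtain d where d: "d \<in> atoms ?L le" "\<not> le d Z1" "Z = ljoin ?L le Z1 d"
          using geoI[OF Z1(1) ZL(1)] by blast
        have dL: "d \<in> ?L" using d unfolding atoms_def by auto
        have Z1Z: "le Z1 Z" "Z1 \<noteq> Z" using Z1 unfolding covers_def by auto
        have dZ: "le d Z" using J[OF Z1(1) dL] d by auto
        have Z1y0: "le Z1 y0" using Lt[OF Z1(1) ZL(1) y0L] Z1Z ZL by auto
        have "height ?L le Z1 < height ?L le Z" using height_strict[OF finL poL Z1(1) ZL(1) Z1Z] .
        then have "Z1 \<notin> S" using Z by fastforce
        then have nb: "\<not> le b (ljoin ?L le a Z1)" using Z1(1) Z1y0 unfolding S_def by auto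
        define V where "V = ljoin ?L le a Z1"
        have V: "V \<in> ?L" "le a V" "le Z1 V" using J[OF aL(1) Z1(1)] unfolding V_def by auto
        define Vb where "Vb = ljoin ?L le V b"
        have Vb: "Vb \<in> ?L" "le V Vb" "le b Vb" "\<And>w. w \<in> ?L \<Longrightarrow> le V w \<Longrightarrow> le b w \<Longrightarrow> le Vb w"
          using J[OF V(1) bL] unfolding Vb_def by auto
        define Vd where "Vd = ljoin ?L le V d"
        have Vd: "Vd \<in> ?L" "le V Vd" "le d Vd" "\<And>w. w \<in> ?L \<Longrightarrow> le V w \<Longrightarrow> le d w \<Longrightarrow> le Vd w"
          using J[OF V(1) dL] unfolding Vd_def by auto
        have "le Z1 Vd" using Lt[OF Z1(1) V(1) Vd(1)] V Vd by auto
        then have ZVd: "le Z Vd" using J[OF Z1(1) dL] Vd d by auto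
        have "le a Vd" using Lt[OF aL(1) V(1) Vd(1)] V Vd by auto
        then have "le (ljoin ?L le a Z) Vd" using J[OF aL(1) ZL(1)] Vd ZVd by auto
        then have bVd: "le b Vd" using Lt[OF bL _ Vd(1)] ZL J[OF aL(1) ZL(1)] by blast
        have VbVd: "le Vb Vd" using Vb(4)[OF Vd(1) Vd(2) bVd] .
        have dV: "\<not> le d V"
        proof
          assume "le d V"
          then have "le Vd V" using Vd(4)[OF V(1) Lr[OF V(1)]] by auto
          then have "Vd = V" using La[OF Vd(1) V(1)] Vd by auto
          then show False using bVd nb unfolding V_def by auto
        qed
        have covVd: "covers ?L le V Vd" using geoI[OF V(1) Vd(1)] d(1) dV unfolding Vd_def by blast
        have "Vb \<noteq> V" using Vb(3) nb unfolding V_def by auto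
        then have "Vb = Vd" using covVd Vb VbVd unfolding covers_def by blast
        then have dVb: "le d Vb" using Vd by auto
        define YZ where "YZ = ljoin ?L le Y Z1"
        have YZ: "YZ \<in> ?L" "le Y YZ" "le Z1 YZ" using J[OF Y(1) Z1(1)] unfolding YZ_def by auto
        have "le a YZ" "le b YZ" using Lt[OF aL(1) Y(1) YZ(1)] Lt[OF bL Y(1) YZ(1)] Y YZ by auto
        then have "le V YZ" using J[OF aL(1) Z1(1)] YZ unfolding V_def by auto
        then have "le Vb YZ" using Vb(4)[OF YZ(1)] \<open>le b YZ\<close> by auto
        then have dYZ: "le d YZ" using Lt[OF dL Vb(1) YZ(1)] dVb by auto
        have dy0: "le d y0" using Lt[OF dL ZL(1) y0L] dZ ZL by auto
        have "le d (lmeet ?L le y0 YZ)" using M[OF y0L YZ(1)] dL dy0 dYZ by auto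
        moreover have "lmeet ?L le y0 YZ = ljoin ?L le (lmeet ?L le y0 Y) Z1"
          using y0(2) Y(1) Z1(1) Z1y0 unfolding modular_elem_def YZ_def by blast
        ultimately have "le d Z1" using Mb bj[OF Z1(1)] unfolding Mm_def by simp
        then show False using d by auto
      qed
      obtain c where c: "c \<in> atoms ?L le" "le c y0" "le c Y" using key by blast
      have cL: "c \<in> ?L" using c unfolding atoms_def by auto
      have "le c z" using Lt[OF cL Y(1) aL(2)] c Y by auto
      then have "le c Zw" using M[OF y0L aL(2)] cL c unfolding Zw_def by auto
      then have cu: "le c u" using Lt[OF cL Zw(1) u(1)] u by auto
      have ca: "c \<noteq> a" using c ay0 by auto
      define Ac where "Ac = ljoin ?L le a c"
      have Ac: "Ac \<in> ?L" "le a Ac" "le c Ac" "le Ac Y" "le Ac u"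
        using J[OF aL(1) cL] Y c u cu unfolding Ac_def by auto
      have "\<not> le b a" using ateq[OF b(1) aA] ba by auto
      then have covY: "covers ?L le a Y" using geoI[OF aL(1) Y(1)] b(1) unfolding Y_def by blast
      have "Ac \<noteq> a" using Ac ateq[OF c(1) aA] ca by auto
      then have "Ac = Y" using covY Ac unfolding covers_def by blast
      then have "le b u" using Lt[OF bL Y(1) u(1)] Y Ac by auto
      then show False using b by auto
    qed
    then show ?thesis using ZwQ fZ unfolding u_def by auto
  qed
  have "poset_iso le Q (up P le a) f"
    unfolding poset_iso_def bij_betw_def
  proof (intro conjI)
    show "inj_on f Q"
    proof (rule inj_onI)
      fix y y' assume "y \<in> Q" "y' \<in> Q" "f y = f y'"
      then show "y = y'" using refl_f refl fy asym QP by (metis subsetD)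
    qed
    show "f ` Q = up P le a"
      using fy surj unfolding up_def by fastforce
    show "\<forall>x\<in>Q. \<forall>y\<in>Q. le x y = le (f x) (f y)" using mono refl_f by blast
  qed
  then show "\<exists>f. poset_iso le Q (up P le a) f" by blast
qed

end
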